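(* Let $\mathcal A=\{G\in\mathcal G:\ \overline G\text{ is Abelian}\}$ and let $A\in\mathcal G$ be such that $\overline A\cong\bigoplus_{p\in\mathbf P}\mathbb Z[p^\infty]^{(\mathbb N)}$. Then the isomorphism class $\{G\in\mathcal G:\ \overline G\cong\overline A\}$ is dense in $\mathcal A$.
   Context: Let $\mathbb N=\{1,2,3,\dots\}$. Equip $\mathbb N^{\mathbb N\times\mathbb N}$ with the product topology of the discrete topology on $\mathbb N$. Let $\mathcal G$ be the subspace consisting of those $A\in\mathbb N^{\mathbb N\times\mathbb N}$ that are the multiplication table of a group on the underlying set $\mathbb N$ whose identity element is $1$. For $G\in\mathcal G$, $\overline G$ denotes the group on $\mathbb N$ with multiplication table $G$. $\mathbf P$ is the set of primes, $\mathbb Z[p^\infty]$ is the Prüfer $p$-group, and $K^{(\mathbb N)}$ is the direct sum of countably infinitely many copies of $K$. $\mathcal A$ carries the subspace topology. *)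

theory Defs
  imports "HOL-Analysis.Analysis" "HOL-Algebra.Algebra"
begin

definition Npos :: "nat set" where "Npos = {1..}"

definition table_space :: "(nat \<times> nat \<Rightarrow> nat) topology" where
  "table_space = product_topology (\<lambda>_. discrete_topology Npos) (Npos \<times> Npos)"

definition tbl :: "(nat \<times> nat \<Rightarrow> nat) \<Rightarrow> nat monoid" where
  "tbl A = \<lparr>carrier = Npos, mult = (\<lambda>x y. A (x, y)), one = 1\<rparr>"

definition GG :: "(nat \<times> nat \<Rightarrow> nat) set" where
  "GG = {A \<in> topspace table_space. group (tbl A)}"

definition AA :: "(nat \<times> nat \<Rightarrow> nat) set" where
  "AA = {A \<in> GG. comm_group (tbl A)}"

text \<open>Pruefer p-group Z[p^infinity], realised as the p-power-denominator part of Q/Z,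
  with representatives in [0,1).\<close>
definition prufer :: "nat \<Rightarrow> rat monoid" where
  "prufer p = \<lparr>carrier = {r::rat. 0 \<le> r \<and> r < 1 \<and> (\<exists>k::nat. r * of_nat (p ^ k) \<in> \<int>)},
               mult = (\<lambda>x y. x + y - of_int \<lfloor>x + y\<rfloor>), one = 0\<rparr>"

definition target_group :: "(nat \<Rightarrow> nat \<Rightarrow> rat) monoid" where
  "target_group = sum_group {p::nat. Factorial_Ring.prime p} (\<lambda>p. sum_group Npos (\<lambda>_. prufer p))"

end

theory Submission
  imports Defs
begin


lemma frac_eq_of_Ints: fixes a b :: rat assumes "a - b \<in> \<int>" shows "frac a = frac b"
proof -
  have "a - frac b = (a - b) + of_int \<lfloor>b\<rfloor>" by (simp add: frac_def)
  also have "\<dots> \<in> \<int>" using assms by simp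
  finally show ?thesis by (simp add: frac_unique_iff frac_lt_1)
qed

definition PP :: "nat \<Rightarrow> rat \<Rightarrow> bool" where
  "PP p r \<longleftrightarrow> (\<exists>k::nat. r * of_nat (p ^ k) \<in> \<int>)"

lemma PP_add: assumes "PP p a" "PP p b" shows "PP p (a + b)"
proof -
  obtain k l where k: "a * of_nat (p^k) \<in> \<int>" and l: "b * of_nat (p^l) \<in> \<int>"
    using assms by (auto simp: PP_def)
  have "(a * of_nat (p^k)) * of_nat (p^l) + (b * of_nat (p^l)) * of_nat (p^k) \<in> \<int>"
    by (intro Ints_add Ints_mult[OF k] Ints_mult[OF l] Ints_of_nat)
  also have "(a * of_nat (p^k)) * of_nat (p^l) + (b * of_nat (p^l)) * of_nat (p^k) = (a+b) * of_nat (p^(k+l))"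
    by (simp add: power_add algebra_simps)
  finally show ?thesis unfolding PP_def by blast
qed

lemma PP_int: assumes "x \<in> \<int>" shows "PP p x"
  unfolding PP_def by (rule exI[of _ 0]) (use assms in simp)

lemma PP_uminus: assumes "PP p a" shows "PP p (- a)"
  using assms unfolding PP_def by (metis Ints_minus minus_mult_left)

lemma PP_diff: assumes "PP p a" "PP p b" shows "PP p (a - b)"
  using PP_add[OF assms(1) PP_uminus[OF assms(2)]] by simp

lemma PP_mult_int: assumes "PP p a" "n \<in> \<int>" shows "PP p (n * a)"
proof -
  obtain k where k: "a * of_nat (p^k) \<in> \<int>" using assms by (auto simp: PP_def)
  have "n * (a * of_nat (p^k)) \<in> \<int>" using k assms by simp
  thus ?thesis unfolding PP_def by (metis mult.assoc)
qed

lemma PP_frac: assumes "PP p a" shows "PP p (frac a)"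
  using PP_diff[OF assms PP_int[of "of_int \<lfloor>a\<rfloor>"]] by (simp add: frac_def)

lemma carrier_prufer: "carrier (prufer p) = {r. 0 \<le> r \<and> r < 1 \<and> PP p r}"
  by (simp add: prufer_def PP_def)

lemma mult_prufer: "x \<otimes>\<^bsub>prufer p\<^esub> y = frac (x + y)"
  by (simp add: prufer_def frac_def)

lemma one_prufer: "\<one>\<^bsub>prufer p\<^esub> = 0"
  by (simp add: prufer_def)

lemma frac_carrier_prufer: "PP p a \<Longrightarrow> frac a \<in> carrier (prufer p)"
  by (simp add: carrier_prufer frac_lt_1 PP_frac)

lemma comm_group_prufer: "comm_group (prufer p)"
proof (rule comm_groupI)
  fix x y z assume x: "x \<in> carrier (prufer p)" and y: "y \<in> carrier (prufer p)" and z: "z \<in> carrier (prufer p)"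
  show "x \<otimes>\<^bsub>prufer p\<^esub> y \<in> carrier (prufer p)"
    using x y by (simp add: mult_prufer carrier_prufer PP_add PP_frac frac_lt_1)
  show "x \<otimes>\<^bsub>prufer p\<^esub> y \<otimes>\<^bsub>prufer p\<^esub> z = x \<otimes>\<^bsub>prufer p\<^esub> (y \<otimes>\<^bsub>prufer p\<^esub> z)"
    unfolding mult_prufer
    by (metis add.assoc frac_add_simps(1) frac_add_simps(2)) 
  show "x \<otimes>\<^bsub>prufer p\<^esub> y = y \<otimes>\<^bsub>prufer p\<^esub> x" by (simp add: mult_prufer add.commute)
  show "\<one>\<^bsub>prufer p\<^esub> \<otimes>\<^bsub>prufer p\<^esub> x = x" using x by (simp add: mult_prufer one_prufer carrier_prufer)
  show "\<exists>y\<in>carrier (prufer p). y \<otimes>\<^bsub>prufer p\<^esub> x = \<one>\<^bsub>prufer p\<^esub>"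
  proof (intro bexI)
    show "frac (- x) \<in> carrier (prufer p)" using x by (simp add: carrier_prufer PP_uminus PP_frac frac_lt_1)
    show "frac (- x) \<otimes>\<^bsub>prufer p\<^esub> x = \<one>\<^bsub>prufer p\<^esub>"
      by (simp add: mult_prufer one_prufer)
  qed
qed (simp add: one_prufer carrier_prufer PP_int)

lemma group_prufer: "group (prufer p)"
  using comm_group_prufer comm_group_def by blast



lemma PP_divisible:
  fixes m :: int and r :: rat
  assumes p: "Factorial_Ring.prime p" and m: "m > 0" and r: "PP p r"
  shows "\<exists>t. PP p t \<and> of_int m * t - r \<in> \<int>"
proof -
  obtain k where "r * of_nat (p^k) \<in> \<int>" using r by (auto simp: PP_def)
  then obtain a :: int where a: "r * of_nat (p^k) = of_int a" by (auto elim: Ints_cases)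
  define n' where "n' = m div int p ^ multiplicity (int p) m"
  have n': "m = int p ^ multiplicity (int p) m * n'" "\<not> int p dvd n'"
  proof -
    have u: "\<not> is_unit (int p)" using p by (simp add: prime_nat_iff)
    show "m = int p ^ multiplicity (int p) m * n'" unfolding n'_def by (simp add: multiplicity_dvd)
    show "\<not> int p dvd n'" unfolding n'_def using multiplicity_decompose[of m "int p"] m u by simp
  qed
  define e where "e = multiplicity (int p) m"
  have pi: "Factorial_Ring.prime (int p)" using p by simp
  have "coprime (int p) n'" by (rule prime_imp_coprime[OF pi n'(2)])
  hence cop: "coprime n' (int p ^ k)" by (simp add: ac_simps)
  obtain u v where uv: "u * n' + v * (int p ^ k) = 1"
    using bezout_int[of n' "int p ^ k"] cop unfolding coprime_iff_gcd_eq_1 by auto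
  define t :: rat where "t = of_int (u * a) / (of_nat p ^ (k + e))"
  have p0: "(of_nat p :: rat) \<noteq> 0" using p by (simp add: prime_gt_0_nat)
  have "t * of_nat (p ^ (k+e)) = of_int (u * a)"
    unfolding t_def using p0 by simp
  hence "PP p t"
    unfolding PP_def by (metis Ints_of_int)
  moreover have "of_int m * t - r = - of_int (v * a)"
  proof -
    have T: "t * of_nat p ^ (k+e) = of_int (u * a)" using \<open>t * of_nat (p ^ (k+e)) = of_int (u * a)\<close> by simp
    have M: "(of_int m :: rat) = of_nat p ^ e * of_int n'" using arg_cong[OF n'(1), of "of_int :: int \<Rightarrow> rat"] unfolding e_def by simp
    have A: "of_int m * t * of_nat p ^ k = of_int n' * (t * of_nat p ^ (k+e))"
      unfolding M by (simp add: power_add algebra_simps)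
    have B: "r * of_nat p ^ k = of_int a" using a by simp
    have C: "(of_int m * t - r) * of_nat p ^ k = (- of_int (v * a)) * of_nat p ^ k"
    proof -
      have "(of_int m * t - r) * of_nat p ^ k = of_int m * t * of_nat p ^ k - r * of_nat p ^ k"
        by (simp add: algebra_simps)
      also have "\<dots> = of_int n' * of_int (u * a) - of_int a"
        unfolding A B T by simp
      also have "\<dots> = of_int ((u * n' - 1) * a)" by (simp add: algebra_simps)
      also have "u * n' - 1 = - v * int p ^ k" using uv by (simp add: algebra_simps)
      finally show ?thesis by (simp add: algebra_simps)
    qed
    have pk: "(of_nat p ^ k :: rat) \<noteq> 0" using p0 by simp
    show ?thesis using C pk by (metis mult_right_cancel)
  qed
  ultimately show ?thesis by (intro exI[of _ t]) simp
qed



definition qchar :: "('a, 'b) monoid_scheme \<Rightarrow> 'a set \<Rightarrow> ('a \<Rightarrow> rat) \<Rightarrow> nat \<Rightarrow> bool" where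
  "qchar G H c p \<longleftrightarrow> subgroup H G \<and> (\<forall>x\<in>H. \<forall>y\<in>H. c (x \<otimes>\<^bsub>G\<^esub> y) - c x - c y \<in> \<int>)
     \<and> (\<forall>x\<in>H. PP p (c x))"

lemma Ints_combine2: fixes a b c :: rat
  assumes "a \<in> \<int>" "b \<in> \<int>" "c = a + b" shows "c \<in> \<int>"
  using assms by simp

lemma Ints_combine3: fixes a b c d :: rat
  assumes "a \<in> \<int>" "b \<in> \<int>" "c \<in> \<int>" "d = a + b + c" shows "d \<in> \<int>"
  using assms by simp

context comm_group
begin

lemma qchar_subgroup: "qchar G H c p \<Longrightarrow> subgroup H G"
  by (simp add: qchar_def)

lemma qchar_mult: "qchar G H c p \<Longrightarrow> x \<in> H \<Longrightarrow> y \<in> H \<Longrightarrow> c (x \<otimes> y) - c x - c y \<in> \<int>"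
  by (simp add: qchar_def)

lemma qchar_PP: "qchar G H c p \<Longrightarrow> x \<in> H \<Longrightarrow> PP p (c x)"
  by (simp add: qchar_def)

lemma qchar_one: assumes "qchar G H c p" shows "c \<one> \<in> \<int>"
proof -
  have o: "\<one> \<in> H" using subgroup.one_closed[OF qchar_subgroup[OF assms]] .
  have "c (\<one> \<otimes> \<one>) - c \<one> - c \<one> \<in> \<int>" using qchar_mult[OF assms o o] .
  hence "- c \<one> \<in> \<int>" by simp
  from Ints_minus[OF this] show ?thesis by simp
qed

lemma qchar_inv: assumes "qchar G H c p" "x \<in> H" shows "c (inv x) + c x \<in> \<int>"
proof -
  have sg: "subgroup H G" using qchar_subgroup[OF assms(1)] .
  have xc: "x \<in> carrier G" using subgroup.subset[OF sg] assms(2) by blast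
  have ix: "inv x \<in> H" using subgroup.m_inv_closed[OF sg assms(2)] .
  have "c (inv x \<otimes> x) - c (inv x) - c x \<in> \<int>" using qchar_mult[OF assms(1) ix assms(2)] .
  moreover have "inv x \<otimes> x = \<one>" using xc by simp
  ultimately have "c \<one> - c (inv x) - c x \<in> \<int>" by simp
  from Ints_combine2[OF qchar_one[OF assms(1)] Ints_minus[OF this]]
  show ?thesis by (simp add: add.commute)
qed

lemma qchar_nat_pow: assumes "qchar G H c p" "x \<in> H" shows "c (x [^] (n::nat)) - of_nat n * c x \<in> \<int>"
proof (induction n)
  case 0
  then show ?case using qchar_one[OF assms(1)] by simp
next
  case (Suc n)
  have sg: "subgroup H G" using qchar_subgroup[OF assms(1)] .
  have xc: "x \<in> carrier G" using subgroup.subset[OF sg] assms(2) by blast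
  have xn: "x [^] n \<in> H" using sg assms(2) subgroup_int_pow_closed[OF sg assms(2), of "int n"]
    by (simp add: int_pow_int)
  have "c (x [^] n \<otimes> x) - c (x [^] n) - c x \<in> \<int>" using qchar_mult[OF assms(1) xn assms(2)] .
  moreover have "x [^] Suc n = x [^] n \<otimes> x" using xc by simp
  ultimately have A: "c (x [^] Suc n) - c (x [^] n) - c x \<in> \<int>" by simp
  show ?case by (rule Ints_combine2[OF A Suc.IH]) (simp add: algebra_simps)
qed

lemma qchar_int_pow: assumes "qchar G H c p" "x \<in> H" shows "c (x [^] (n::int)) - of_int n * c x \<in> \<int>"
proof (cases "n \<ge> 0")
  case True
  define k where "k = nat n"
  have k: "n = int k" using True by (simp add: k_def)
  show ?thesis using qchar_nat_pow[OF assms, of k] unfolding k by (simp add: int_pow_int)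
next
  case False
  define k where "k = nat (- n)"
  have k: "n = - int k" using False by (simp add: k_def)
  have sg: "subgroup H G" using qchar_subgroup[OF assms(1)] .
  have xc: "x \<in> carrier G" using subgroup.subset[OF sg] assms(2) by blast
  have xn: "x [^] k \<in> H" using subgroup_int_pow_closed[OF sg assms(2), of "int k"]
    by (simp add: int_pow_int)
  have e: "x [^] n = inv (x [^] k)" unfolding k using xc by (simp add: int_pow_neg_int)
  have A: "c (inv (x [^] k)) + c (x [^] k) \<in> \<int>" using qchar_inv[OF assms(1) xn] .
  have B: "c (x [^] k) - of_nat k * c x \<in> \<int>" using qchar_nat_pow[OF assms] .
  have "c (inv (x [^] k)) - of_int n * c x \<in> \<int>"
    by (rule Ints_combine2[OF A Ints_minus[OF B]]) (simp add: k)
  thus ?thesis unfolding e .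
qed

end


context comm_group
begin

lemma qchar_ext:
  assumes q: "qchar G H c p" and g: "g \<in> carrier G" and t: "PP p t"
    and tc: "\<And>n::int. g [^] n \<in> H \<Longrightarrow> c (g [^] n) - of_int n * t \<in> \<int>"
  shows "\<exists>H' c'. qchar G H' c' p \<and> H \<subseteq> H' \<and> g \<in> H' \<and> (\<forall>x\<in>H. c' x - c x \<in> \<int>) \<and> c' g - t \<in> \<int>"
proof -
  have sg: "subgroup H G" using q by (rule qchar_subgroup)
  have Hc: "H \<subseteq> carrier G" using subgroup.subset[OF sg] .
  define H' where "H' = {x. \<exists>h k. h \<in> H \<and> x = h \<otimes> g [^] (k::int)}"
  define dec where "dec x = (SOME hk. fst hk \<in> H \<and> x = fst hk \<otimes> g [^] (snd hk::int))" for x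
  define c' where "c' x = c (fst (dec x)) + of_int (snd (dec x)) * t" for x
  have WD: "c h + of_int k * t - (c h' + of_int k' * t) \<in> \<int>"
    if h: "h \<in> H" and h': "h' \<in> H" and eq: "h \<otimes> g [^] k = h' \<otimes> g [^] k'" for h h' and k k' :: int
  proof -
    have hc: "h \<in> carrier G" and h'c: "h' \<in> carrier G" using h h' Hc by auto
    have gk: "g [^] k \<in> carrier G" "g [^] k' \<in> carrier G" using g by auto
    have "h' = h' \<otimes> g [^] k' \<otimes> inv (g [^] k')" using h'c gk by (simp add: m_assoc)
    also have "\<dots> = h \<otimes> g [^] k \<otimes> inv (g [^] k')" using eq by simp
    also have "\<dots> = h \<otimes> g [^] (k - k')" using hc gk g by (simp add: m_assoc int_pow_diff)
    finally have e: "h' = h \<otimes> g [^] (k - k')" .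
    have gd: "g [^] (k - k') \<in> carrier G" using g by simp
    have "inv h \<otimes> h' = g [^] (k - k')" unfolding e using hc gd by (simp add: m_assoc[symmetric])
    moreover have "inv h \<otimes> h' \<in> H"
      using subgroup.m_closed[OF sg subgroup.m_inv_closed[OF sg h] h'] .
    ultimately have gdH: "g [^] (k - k') \<in> H" by simp
    have A: "c (h \<otimes> g [^] (k-k')) - c h - c (g [^] (k-k')) \<in> \<int>" using qchar_mult[OF q h gdH] .
    hence A': "c h' - c h - c (g [^] (k-k')) \<in> \<int>" using e by simp
    have B: "c (g [^] (k-k')) - of_int (k-k') * t \<in> \<int>" using tc[OF gdH] .
    show ?thesis
      by (rule Ints_combine2[OF Ints_minus[OF A'] Ints_minus[OF B]]) (simp add: algebra_simps)
  qed
  have dec: "fst (dec x) \<in> H \<and> x = fst (dec x) \<otimes> g [^] snd (dec x)" if "x \<in> H'" for x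
  proof -
    from that obtain h and k :: int where hk: "h \<in> H" "x = h \<otimes> g [^] k" unfolding H'_def by auto
    show ?thesis unfolding dec_def by (rule someI[of _ "(h,k)"]) (use hk in simp)
  qed
  have inH': "h \<otimes> g [^] k \<in> H'" if "h \<in> H" for h and k :: int
    unfolding H'_def using that by auto
  have c'val: "c' x - (c h + of_int k * t) \<in> \<int>" if hk: "h \<in> H" "x = h \<otimes> g [^] k" for x h and k :: int
  proof -
    have xH: "x \<in> H'" using inH' hk by simp
    have d: "fst (dec x) \<in> H" "fst (dec x) \<otimes> g [^] snd (dec x) = h \<otimes> g [^] k"
      using dec[OF xH] hk by auto
    show ?thesis unfolding c'_def by (rule WD[OF d(1) hk(1) d(2)])
  qed
  have H'c: "H' \<subseteq> carrier G"
  proof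
    fix x assume "x \<in> H'"
    then obtain h and k :: int where hk: "h \<in> H" "x = h \<otimes> g [^] k" unfolding H'_def by auto
    have "h \<in> carrier G" using hk Hc by auto
    thus "x \<in> carrier G" using hk g by simp
  qed
  have HH': "H \<subseteq> H'"
  proof
    fix x assume x: "x \<in> H"
    have "x \<otimes> g [^] (0::int) \<in> H'" by (rule inH'[OF x])
    moreover have "x \<in> carrier G" using x Hc by auto
    ultimately show "x \<in> H'" by simp
  qed
  have one1: "\<one> \<in> H" using subgroup.one_closed[OF sg] .
  have gH': "g \<in> H'"
  proof -
    have "\<one> \<otimes> g [^] (1::int) \<in> H'" by (rule inH'[OF one1])
    thus ?thesis using g by simp
  qed
  have sg': "subgroup H' G"
  proof (rule subgroupI)
    show "H' \<subseteq> carrier G" by (rule H'c)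
    show "H' \<noteq> {}" using gH' by auto
  next
    fix a assume "a \<in> H'"
    then obtain h and k :: int where hk: "h \<in> H" "a = h \<otimes> g [^] k" unfolding H'_def by auto
    have hc: "h \<in> carrier G" using hk Hc by auto
    have "inv a = inv h \<otimes> g [^] (- k)" unfolding hk(2) using hc g by (simp add: inv_mult int_pow_neg)
    thus "inv a \<in> H'" using inH'[OF subgroup.m_inv_closed[OF sg hk(1)]] by simp
  next
    fix a b assume "a \<in> H'" "b \<in> H'"
    then obtain h1 h2 and k1 k2 :: int where hk: "h1 \<in> H" "a = h1 \<otimes> g [^] k1" "h2 \<in> H" "b = h2 \<otimes> g [^] k2"
      unfolding H'_def by auto
    have hc: "h1 \<in> carrier G" "h2 \<in> carrier G" using hk Hc by auto
    have "a \<otimes> b = (h1 \<otimes> h2) \<otimes> g [^] (k1 + k2)"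
      unfolding hk using hc g by (simp add: int_pow_mult m_ac)
    thus "a \<otimes> b \<in> H'" using inH'[OF subgroup.m_closed[OF sg hk(1) hk(3)]] by simp
  qed
  have qm: "c' (x \<otimes> y) - c' x - c' y \<in> \<int>" if x: "x \<in> H'" and y: "y \<in> H'" for x y
  proof -
    define h1 k1 h2 k2 where "h1 = fst (dec x)" "k1 = snd (dec x)" "h2 = fst (dec y)" "k2 = snd (dec y)"
    have d: "h1 \<in> H" "x = h1 \<otimes> g [^] k1" "h2 \<in> H" "y = h2 \<otimes> g [^] k2"
      using dec[OF x] dec[OF y] unfolding h1_k1_h2_k2_def by auto
    have hc: "h1 \<in> carrier G" "h2 \<in> carrier G" using d Hc by auto
    have xy: "x \<otimes> y = (h1 \<otimes> h2) \<otimes> g [^] (k1 + k2)"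
      unfolding d(2,4) using hc g by (simp add: int_pow_mult m_ac)
    have h12: "h1 \<otimes> h2 \<in> H" using subgroup.m_closed[OF sg d(1) d(3)] .
    have A: "c' (x \<otimes> y) - (c (h1 \<otimes> h2) + of_int (k1 + k2) * t) \<in> \<int>" by (rule c'val[OF h12 xy])
    have B: "c (h1 \<otimes> h2) - c h1 - c h2 \<in> \<int>" by (rule qchar_mult[OF q d(1) d(3)])
    have cx: "c' x = c h1 + of_int k1 * t" "c' y = c h2 + of_int k2 * t"
      unfolding c'_def h1_k1_h2_k2_def by simp_all
    show ?thesis
      by (rule Ints_combine2[OF A B]) (simp add: cx algebra_simps)
  qed
  have qp: "PP p (c' x)" if x: "x \<in> H'" for x
    unfolding c'_def
    by (rule PP_add[OF qchar_PP[OF q conjunct1[OF dec[OF x]]] PP_mult_int[OF t]]) simp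
  have q': "qchar G H' c' p" unfolding qchar_def using sg' qm qp by blast
  have ext: "\<forall>x\<in>H. c' x - c x \<in> \<int>"
  proof
    fix x assume x: "x \<in> H"
    have "x \<in> carrier G" using x Hc by auto
    hence "x = x \<otimes> g [^] (0::int)" by simp
    from c'val[OF x this] show "c' x - c x \<in> \<int>" by simp
  qed
  have cg: "c' g - (c \<one> + of_int 1 * t) \<in> \<int>" by (rule c'val[OF one1]) (use g in simp)
  have "c' g - t \<in> \<int>"
    by (rule Ints_combine2[OF cg qchar_one[OF q]]) simp
  thus ?thesis using q' HH' gH' ext by blast
qed

end


lemma rat_not_Int_01: fixes x :: rat assumes "0 < x" "x < 1" shows "x \<notin> \<int>"
proof
  assume "x \<in> \<int>"
  then obtain k where "x = of_int k" by (auto elim: Ints_cases)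
  with assms show False by simp
qed

context comm_group
begin

lemma powers_ideal:
  assumes sg: "subgroup H G" and g: "g \<in> carrier G"
  shows "(\<forall>n::int. g [^] n \<in> H \<longrightarrow> n = 0) \<or> (\<exists>m::int. m > 0 \<and> g [^] m \<in> H \<and> (\<forall>n. g [^] n \<in> H \<longrightarrow> m dvd n))"
proof (cases "\<forall>n::int. g [^] n \<in> H \<longrightarrow> n = 0")
  case True thus ?thesis by (rule disjI1)
next
  case False
  then obtain n0 :: int where n0: "g [^] n0 \<in> H" "n0 \<noteq> 0" by auto
  have pos: "\<exists>k::nat. k > 0 \<and> g [^] (int k) \<in> H"
  proof (cases "n0 > 0")
    case True then show ?thesis using n0 by (intro exI[of _ "nat n0"]) simp
  next
    case False
    have "g [^] (- n0) \<in> H" using subgroup.m_inv_closed[OF sg n0(1)] g by (simp add: int_pow_neg)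
    then show ?thesis using False n0 by (intro exI[of _ "nat (- n0)"]) simp
  qed
  define m where "m = (LEAST k::nat. k > 0 \<and> g [^] (int k) \<in> H)"
  have m: "m > 0 \<and> g [^] (int m) \<in> H" unfolding m_def using LeastI_ex[OF pos] .
  have mmin: "m \<le> k" if "k > 0" "g [^] (int k) \<in> H" for k
    unfolding m_def by (rule Least_le) (use that in simp)
  have dv: "int m dvd n" if n: "g [^] n \<in> H" for n :: int
  proof -
    define r where "r = n mod int m"
    have r: "r = n - int m * (n div int m)" unfolding r_def using minus_mult_div_eq_mod[of n "int m"] by simp
    have gm: "g [^] int m \<in> H" using m by simp
    have "g [^] r = g [^] n \<otimes> inv ((g [^] int m) [^] (n div int m))"
      using g unfolding r by (simp add: int_pow_diff int_pow_pow)
    moreover have "g [^] n \<otimes> inv ((g [^] int m) [^] (n div int m)) \<in> H"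
      by (rule subgroup.m_closed[OF sg n subgroup.m_inv_closed[OF sg subgroup_int_pow_closed[OF sg gm]]])
    ultimately have rH: "g [^] r \<in> H" by simp
    have r0: "0 \<le> r" "r < int m" unfolding r_def using m by simp_all
    have "r = 0"
    proof (rule ccontr)
      assume "r \<noteq> 0"
      hence "nat r > 0" using r0 by simp
      moreover have "g [^] (int (nat r)) \<in> H" using rH r0 by simp
      ultimately have "m \<le> nat r" by (rule mmin)
      thus False using r0 by simp
    qed
    thus ?thesis unfolding r_def by (simp add: dvd_eq_mod_eq_0)
  qed
  show ?thesis
    by (rule disjI2, rule exI[of _ "int m"]) (use m dv in simp)
qed

lemma qchar_step:
  assumes q: "qchar G H c p" and p: "Factorial_Ring.prime p" and g: "g \<in> carrier G"
  shows "\<exists>H' c'. qchar G H' c' p \<and> H \<subseteq> H' \<and> g \<in> H' \<and> (\<forall>x\<in>H. c' x - c x \<in> \<int>)"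
proof -
  have sg: "subgroup H G" using q by (rule qchar_subgroup)
  have "\<exists>t. PP p t \<and> (\<forall>n::int. g [^] n \<in> H \<longrightarrow> c (g [^] n) - of_int n * t \<in> \<int>)"
    using powers_ideal[OF sg g]
  proof
    assume A: "\<forall>n::int. g [^] n \<in> H \<longrightarrow> n = 0"
    show ?thesis
    proof (intro exI[of _ 0] conjI allI impI)
      show "PP p 0" by (rule PP_int) simp
      fix n :: int assume "g [^] n \<in> H"
      hence "n = 0" using A by simp
      thus "c (g [^] n) - of_int n * 0 \<in> \<int>" using qchar_one[OF q] by simp
    qed
  next
    assume "\<exists>m::int. m > 0 \<and> g [^] m \<in> H \<and> (\<forall>n. g [^] n \<in> H \<longrightarrow> m dvd n)"
    then obtain m :: int where m: "m > 0" "g [^] m \<in> H" "\<And>n. g [^] n \<in> H \<Longrightarrow> m dvd n" by auto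
    obtain t where t: "PP p t" "of_int m * t - c (g [^] m) \<in> \<int>"
      using PP_divisible[OF p m(1) qchar_PP[OF q m(2)]] by auto
    show ?thesis
    proof (intro exI[of _ t] conjI allI impI)
      show "PP p t" by (rule t(1))
      fix n :: int assume n: "g [^] n \<in> H"
      obtain j where j: "n = m * j" using m(3)[OF n] by (auto elim: dvdE)
      have e: "g [^] n = (g [^] m) [^] j" using g unfolding j by (simp add: int_pow_pow)
      have A: "c ((g [^] m) [^] j) - of_int j * c (g [^] m) \<in> \<int>" by (rule qchar_int_pow[OF q m(2)])
      have B: "of_int j * (of_int m * t - c (g [^] m)) \<in> \<int>" using t(2) by simp
      show "c (g [^] n) - of_int n * t \<in> \<int>"
        by (rule Ints_combine2[OF A Ints_minus[OF B]]) (unfold e, simp add: j algebra_simps)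
    qed
  qed
  then obtain t where t: "PP p t" "\<And>n::int. g [^] n \<in> H \<Longrightarrow> c (g [^] n) - of_int n * t \<in> \<int>" by auto
  from qchar_ext[OF q g t(1) t(2)] show ?thesis by auto
qed

lemma qchar_init:
  assumes g: "g \<in> carrier G" "g \<noteq> \<one>"
  shows "\<exists>p H c. Factorial_Ring.prime p \<and> qchar G H c p \<and> g \<in> H \<and> c g \<notin> \<int>"
proof -
  have q0: "qchar G {\<one>} (\<lambda>_. 0) p" for p
    unfolding qchar_def using triv_subgroup by (simp add: PP_int)
  have "\<exists>p t. Factorial_Ring.prime p \<and> PP p t \<and> 0 < t \<and> t < 1 \<and> (\<forall>n::int. g [^] n \<in> {\<one>} \<longrightarrow> 0 - of_int n * t \<in> \<int>)"
    using powers_ideal[OF triv_subgroup g(1)]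
  proof
    assume A: "\<forall>n::int. g [^] n \<in> {\<one>} \<longrightarrow> n = 0"
    show ?thesis
    proof (intro exI[of _ "2::nat"] exI[of _ "1/2"] conjI allI impI)
      show "PP 2 (1/2)" unfolding PP_def by (rule exI[of _ 1]) simp
      fix n :: int assume "g [^] n \<in> {\<one>}"
      hence "n = 0" using A by simp
      thus "0 - of_int n * (1/2) \<in> \<int>" by simp
    qed simp_all
  next
    assume "\<exists>m::int. m > 0 \<and> g [^] m \<in> {\<one>} \<and> (\<forall>n. g [^] n \<in> {\<one>} \<longrightarrow> m dvd n)"
    then obtain m :: int where m: "m > 0" "g [^] m \<in> {\<one>}" "\<And>n. g [^] n \<in> {\<one>} \<Longrightarrow> m dvd n" by auto
    have "m \<noteq> 1" using m(2) g by auto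
    hence "nat m \<noteq> 1" using m(1) by simp
    then obtain p :: nat where p: "Factorial_Ring.prime p" "p dvd nat m" using prime_factor_nat by blast
    have p2: "p \<ge> 2" using p(1) prime_ge_2_nat by blast
    have "int p dvd int (nat m)" using p(2) by (simp only: of_nat_dvd_iff)
    hence pm: "int p dvd m" using m(1) by simp
    show ?thesis
    proof (intro exI[of _ p] exI[of _ "1 / of_nat p"] conjI allI impI)
      show "Factorial_Ring.prime p" by (rule p(1))
      show "PP p (1 / of_nat p)" unfolding PP_def by (rule exI[of _ 1]) (use p2 in simp)
      show "0 < 1 / (of_nat p :: rat)" using p2 by simp
      show "1 / (of_nat p :: rat) < 1" using p2 by simp
      fix n :: int assume "g [^] n \<in> {\<one>}"
      hence "m dvd n" by (rule m(3))
      hence "int p dvd n" using pm by (rule dvd_trans[rotated])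
      then obtain j where j: "n = int p * j" by (auto elim: dvdE)
      have e: "of_int n * (1 / of_nat p) = (of_int j :: rat)" unfolding j using p2 by (simp add: field_simps)
      show "0 - of_int n * (1 / of_nat p :: rat) \<in> \<int>" using e by simp
    qed
  qed
  then obtain p t where pt: "Factorial_Ring.prime p" "PP p t" "0 < t" "t < 1"
    "\<And>n::int. g [^] n \<in> {\<one>} \<Longrightarrow> 0 - of_int n * t \<in> \<int>" by auto
  obtain H c where Hc: "qchar G H c p" "g \<in> H" "c g - t \<in> \<int>"
    using qchar_ext[OF q0 g(1) pt(2) pt(5)] by auto
  have "c g \<notin> \<int>"
  proof
    assume "c g \<in> \<int>"
    hence "c g - (c g - t) \<in> \<int>" using Hc(3) by (rule Ints_diff)
    thus False using rat_not_Int_01[OF pt(3,4)] by simp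
  qed
  thus ?thesis using pt(1) Hc by auto
qed

lemma qchar_finite:
  assumes "finite S" "S \<subseteq> carrier G" "qchar G H c p" "Factorial_Ring.prime p"
  shows "\<exists>H' c'. qchar G H' c' p \<and> H \<subseteq> H' \<and> S \<subseteq> H' \<and> (\<forall>x\<in>H. c' x - c x \<in> \<int>)"
  using assms(1,2)
proof (induction S rule: finite_induct)
  case empty
  show ?case by (rule exI[of _ H], rule exI[of _ c]) (use assms(3) in simp)
next
  case (insert x F)
  then obtain H1 c1 where h1: "qchar G H1 c1 p" "H \<subseteq> H1" "F \<subseteq> H1" "\<forall>y\<in>H. c1 y - c y \<in> \<int>" by auto
  have xc: "x \<in> carrier G" using insert.prems by simp
  obtain H2 c2 where h2: "qchar G H2 c2 p" "H1 \<subseteq> H2" "x \<in> H2" "\<forall>y\<in>H1. c2 y - c1 y \<in> \<int>"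
    using qchar_step[OF h1(1) assms(4) xc] by auto
  have "\<forall>y\<in>H. c2 y - c y \<in> \<int>"
  proof
    fix y assume y: "y \<in> H"
    have a: "c2 y - c1 y \<in> \<int>" using h2(4) h1(2) y by auto
    have b: "c1 y - c y \<in> \<int>" using h1(4) y by auto
    show "c2 y - c y \<in> \<int>" by (rule Ints_combine2[OF a b]) simp
  qed
  moreover have "H \<subseteq> H2" using h1(2) h2(2) by (rule subset_trans)
  moreover have "insert x F \<subseteq> H2" using h1(3) h2(2,3) by auto
  ultimately show ?case using h2(1) by blast
qed

lemma qchar_sep:
  assumes S: "finite S" "S \<subseteq> carrier G" and su: "s \<in> S" "u \<in> S" "s \<noteq> u"
  shows "\<exists>p H c. Factorial_Ring.prime p \<and> qchar G H c p \<and> S \<subseteq> H \<and> c s - c u \<notin> \<int>"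
proof -
  have sc: "s \<in> carrier G" and uc: "u \<in> carrier G" using S su by auto
  define g where "g = s \<otimes> inv u"
  have gc: "g \<in> carrier G" unfolding g_def using sc uc by simp
  have gs: "g \<otimes> u = s" unfolding g_def using sc uc by (simp add: m_assoc)
  have g1: "g \<noteq> \<one>"
  proof
    assume "g = \<one>"
    hence "s = u" using gs uc by simp
    thus False using su by simp
  qed
  obtain p H0 c0 where i: "Factorial_Ring.prime p" "qchar G H0 c0 p" "g \<in> H0" "c0 g \<notin> \<int>"
    using qchar_init[OF gc g1] by auto
  obtain H c where f: "qchar G H c p" "H0 \<subseteq> H" "S \<subseteq> H" "\<forall>x\<in>H0. c x - c0 x \<in> \<int>"
    using qchar_finite[OF S i(2) i(1)] by auto
  have gH: "g \<in> H" using f(2) i(3) by auto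
  have uH: "u \<in> H" using f(3) su by auto
  have cg: "c g \<notin> \<int>"
  proof
    assume "c g \<in> \<int>"
    hence "c g - (c g - c0 g) \<in> \<int>" using f(4) i(3) by (intro Ints_diff) auto
    thus False using i(4) by simp
  qed
  have m: "c (g \<otimes> u) - c g - c u \<in> \<int>" by (rule qchar_mult[OF f(1) gH uH])
  have "c s - c u \<notin> \<int>"
  proof
    assume a: "c s - c u \<in> \<int>"
    have "c g \<in> \<int>" by (rule Ints_combine2[OF a Ints_minus[OF m]]) (simp add: gs)
    thus False using cg by simp
  qed
  thus ?thesis using i(1) f(1,3) by auto
qed

end


abbreviation Prm :: "nat set" where "Prm \<equiv> {p::nat. Factorial_Ring.prime p}"

lemma group_inner: "group (sum_group Npos (\<lambda>_. prufer p))"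
  by (rule sum_group) (rule group_prufer)

lemma group_tg: "group target_group"
  unfolding target_group_def by (rule sum_group) (rule group_inner)

lemma carrier_inner: "carrier (sum_group Npos (\<lambda>_. prufer p)) =
   {x \<in> Pi\<^sub>E Npos (\<lambda>_. carrier (prufer p)). finite {i \<in> Npos. x i \<noteq> 0}}"
  by (subst carrier_sum_group) (auto simp: group_prufer one_prufer)

lemma carrier_tg: "carrier target_group =
   {x \<in> Pi\<^sub>E Prm (\<lambda>p. carrier (sum_group Npos (\<lambda>_. prufer p))).
      finite {p \<in> Prm. x p \<noteq> (\<lambda>i\<in>Npos. 0)}}"
  unfolding target_group_def
  by (subst carrier_sum_group) (auto simp: group_inner one_prufer)

lemma mult_tg: "x \<otimes>\<^bsub>target_group\<^esub> y = (\<lambda>p\<in>Prm. \<lambda>i\<in>Npos. frac (x p i + y p i))"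
  unfolding target_group_def by (simp add: mult_prufer)

lemma one_tg: "\<one>\<^bsub>target_group\<^esub> = (\<lambda>p\<in>Prm. \<lambda>i\<in>Npos. 0)"
  unfolding target_group_def by (simp add: one_prufer)

lemma comm_group_tg: "comm_group target_group"
  by (rule group.group_comm_groupI[OF group_tg]) (simp add: mult_tg add.commute)

lemma transport_group:
  fixes M :: "('a, 'c) monoid_scheme" and T :: "('b, 'd) monoid_scheme"
  assumes T: "group T" and bij: "bij_betw f (carrier M) (carrier T)"
    and hom: "\<And>x y. x \<in> carrier M \<Longrightarrow> y \<in> carrier M \<Longrightarrow> f (x \<otimes>\<^bsub>M\<^esub> y) = f x \<otimes>\<^bsub>T\<^esub> f y"
    and cl: "\<And>x y. x \<in> carrier M \<Longrightarrow> y \<in> carrier M \<Longrightarrow> x \<otimes>\<^bsub>M\<^esub> y \<in> carrier M"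
    and one: "\<one>\<^bsub>M\<^esub> \<in> carrier M" "f \<one>\<^bsub>M\<^esub> = \<one>\<^bsub>T\<^esub>"
  shows "group M"
proof (rule groupI)
  have inj: "inj_on f (carrier M)" using bij by (simp add: bij_betw_def)
  have fc: "f x \<in> carrier T" if "x \<in> carrier M" for x using bij that by (auto simp: bij_betw_def)
  show "x \<otimes>\<^bsub>M\<^esub> y \<in> carrier M" if "x \<in> carrier M" "y \<in> carrier M" for x y using cl that .
  show "\<one>\<^bsub>M\<^esub> \<in> carrier M" by (rule one(1))
  show "x \<otimes>\<^bsub>M\<^esub> y \<otimes>\<^bsub>M\<^esub> z = x \<otimes>\<^bsub>M\<^esub> (y \<otimes>\<^bsub>M\<^esub> z)"
    if xyz: "x \<in> carrier M" "y \<in> carrier M" "z \<in> carrier M" for x y z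
  proof (rule inj_onD[OF inj])
    show "f (x \<otimes>\<^bsub>M\<^esub> y \<otimes>\<^bsub>M\<^esub> z) = f (x \<otimes>\<^bsub>M\<^esub> (y \<otimes>\<^bsub>M\<^esub> z))"
      using xyz by (simp add: hom cl fc group.is_monoid[OF T] monoid.m_assoc)
  qed (use xyz cl in auto)
  show "\<one>\<^bsub>M\<^esub> \<otimes>\<^bsub>M\<^esub> x = x" if x: "x \<in> carrier M" for x
  proof (rule inj_onD[OF inj])
    show "f (\<one>\<^bsub>M\<^esub> \<otimes>\<^bsub>M\<^esub> x) = f x"
      using x one by (simp add: hom fc group.is_monoid[OF T] monoid.l_one)
  qed (use x one cl in auto)
  show "\<exists>y\<in>carrier M. y \<otimes>\<^bsub>M\<^esub> x = \<one>\<^bsub>M\<^esub>" if x: "x \<in> carrier M" for x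
  proof
    define y where "y = inv_into (carrier M) f (inv\<^bsub>T\<^esub> (f x))"
    have ic: "inv\<^bsub>T\<^esub> (f x) \<in> carrier T" using fc[OF x] T by (simp add: group.inv_closed)
    hence ic': "inv\<^bsub>T\<^esub> (f x) \<in> f ` carrier M" using bij by (simp add: bij_betw_def)
    show yc: "y \<in> carrier M" unfolding y_def using ic' by (rule inv_into_into)
    have fy: "f y = inv\<^bsub>T\<^esub> (f x)" unfolding y_def using ic' by (rule f_inv_into_f)
    show "y \<otimes>\<^bsub>M\<^esub> x = \<one>\<^bsub>M\<^esub>"
    proof (rule inj_onD[OF inj])
      show "f (y \<otimes>\<^bsub>M\<^esub> x) = f \<one>\<^bsub>M\<^esub>"
        using x yc by (simp add: hom fy one(2) group.l_inv[OF T] fc)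
    qed (use x yc one cl in auto)
  qed
qed



lemma countable_bij:
  assumes "countable A" "infinite A" "countable B" "infinite B"
  shows "\<exists>f. bij_betw f A B"
proof -
  obtain e :: "'a \<Rightarrow> nat" where e: "bij_betw e A UNIV" using countableE_infinite assms(1,2) by blast
  obtain d :: "'b \<Rightarrow> nat" where d: "bij_betw d B UNIV" using countableE_infinite assms(3,4) by blast
  have "bij_betw (inv_into B d \<circ> e) A B" using bij_betw_trans[OF e bij_betw_inv_into[OF d]] .
  thus ?thesis by blast
qed

lemma extend_bij:
  assumes A: "countable A" "infinite A" and B: "countable B" "infinite B"
    and S: "finite S" "S \<subseteq> A" and psi: "inj_on \<psi> S" "\<psi> ` S \<subseteq> B"
  shows "\<exists>\<phi>. bij_betw \<phi> A B \<and> (\<forall>x\<in>S. \<phi> x = \<psi> x)"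
proof -
  have "countable (A - S)" using A(1) by auto
  moreover have "infinite (A - S)" using A(2) S(1) by auto
  moreover have "countable (B - \<psi> ` S)" using B(1) by auto
  moreover have "infinite (B - \<psi> ` S)" using B(2) S(1) by auto
  ultimately obtain f where f: "bij_betw f (A - S) (B - \<psi> ` S)" using countable_bij by blast
  define \<phi> where "\<phi> x = (if x \<in> S then \<psi> x else f x)" for x
  have b1: "bij_betw \<phi> S (\<psi> ` S)"
    using inj_on_imp_bij_betw[OF psi(1)] by (rule bij_betw_cong[THEN iffD1, rotated]) (simp add: \<phi>_def)
  have b2: "bij_betw \<phi> (A - S) (B - \<psi> ` S)"
    using f by (rule bij_betw_cong[THEN iffD1, rotated]) (simp add: \<phi>_def)
  have "bij_betw \<phi> (S \<union> (A - S)) (\<psi> ` S \<union> (B - \<psi> ` S))"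
    by (rule bij_betw_combine[OF b1 b2]) auto
  moreover have "S \<union> (A - S) = A" "\<psi> ` S \<union> (B - \<psi> ` S) = B" using S(2) psi(2) by auto
  ultimately show ?thesis by (intro exI[of _ \<phi>]) (simp add: \<phi>_def)
qed

lemma frac_eq_imp_Ints: fixes a b :: rat assumes "frac a = frac b" shows "a - b \<in> \<int>"
proof -
  have "a - b = (frac a + of_int \<lfloor>a\<rfloor>) - (frac b + of_int \<lfloor>b\<rfloor>)" by (simp add: frac_def)
  also have "\<dots> = of_int (\<lfloor>a\<rfloor> - \<lfloor>b\<rfloor>)" using assms by simp
  finally show ?thesis by simp
qed

lemma qfrac:
  assumes "comm_group K" "qchar K H c p" "x \<in> H" "y \<in> H"
  shows "frac (c (x \<otimes>\<^bsub>K\<^esub> y)) = frac (frac (c x) + frac (c y))"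
proof (rule frac_eq_of_Ints)
  have A: "c (x \<otimes>\<^bsub>K\<^esub> y) - c x - c y \<in> \<int>" using comm_group.qchar_mult[OF assms] .
  show "c (x \<otimes>\<^bsub>K\<^esub> y) - (frac (c x) + frac (c y)) \<in> \<int>"
    by (rule Ints_combine2[OF A, of "of_int (\<lfloor>c x\<rfloor> + \<lfloor>c y\<rfloor>)"]) (simp_all add: frac_def)
qed

lemma Npos_infinite: "infinite Npos"
  unfolding Npos_def by (simp add: infinite_Ici)



lemma dense_main:
  assumes GA: "G \<in> AA" and AT: "tbl A \<cong> target_group" and AG: "A \<in> GG"
    and C: "finite C" "C \<subseteq> Npos \<times> Npos"
  shows "\<exists>H. H \<in> GG \<and> tbl H \<cong> tbl A \<and> (\<forall>z\<in>C. H z = G z)"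
proof -
  let ?T = target_group
  have cgK: "comm_group (tbl G)" using GA by (simp add: AA_def)
  interpret K: comm_group "tbl G" by (rule cgK)
  have cK: "carrier (tbl G) = Npos" "\<And>x y. x \<otimes>\<^bsub>tbl G\<^esub> y = G (x,y)" "\<one>\<^bsub>tbl G\<^esub> = 1"
    by (simp_all add: tbl_def)
  have Gcl: "G (x, y) \<in> Npos" if "x \<in> Npos" "y \<in> Npos" for x y
    using K.m_closed[of x y] that by (simp add: cK)
  have one_N: "(1::nat) \<in> Npos" by (simp add: Npos_def)
  define S where "S = insert 1 (fst ` C \<union> snd ` C \<union> G ` C)"
  have SN: "S \<subseteq> Npos"
  proof
    fix s assume "s \<in> S"
    then consider "s = 1" | "s \<in> fst ` C" | "s \<in> snd ` C" | "s \<in> G ` C" unfolding S_def by auto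
    thus "s \<in> Npos"
    proof cases
      case 4 then obtain x y where "(x,y) \<in> C" "s = G (x,y)" by auto
      thus ?thesis using C(2) Gcl by auto
    qed (use one_N C(2) in auto)
  qed
  have Sf: "finite S" unfolding S_def using C(1) by simp
  have SK: "S \<subseteq> carrier (tbl G)" using SN cK by simp
  define P where "P = {j \<in> S \<times> S. fst j \<noteq> snd j}"
  have Pf: "finite P" unfolding P_def using Sf by simp
  have "\<forall>j\<in>P. \<exists>pc. Factorial_Ring.prime (fst pc) \<and> (\<exists>H. qchar (tbl G) H (snd pc) (fst pc) \<and> S \<subseteq> H)
          \<and> snd pc (fst j) - snd pc (snd j) \<notin> \<int>"
  proof
    fix j assume j: "j \<in> P"
    hence "fst j \<in> S" "snd j \<in> S" "fst j \<noteq> snd j" unfolding P_def by auto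
    from K.qchar_sep[OF Sf SK this] obtain p H c where
      "Factorial_Ring.prime p" "qchar (tbl G) H c p" "S \<subseteq> H" "c (fst j) - c (snd j) \<notin> \<int>" by auto
    thus "\<exists>pc. Factorial_Ring.prime (fst pc) \<and> (\<exists>H. qchar (tbl G) H (snd pc) (fst pc) \<and> S \<subseteq> H)
          \<and> snd pc (fst j) - snd pc (snd j) \<notin> \<int>"
      by (intro exI[of _ "(p, c)"]) auto
  qed
  then obtain pc where pc: "\<And>j. j \<in> P \<Longrightarrow> Factorial_Ring.prime (fst (pc j)) \<and>
      (\<exists>H. qchar (tbl G) H (snd (pc j)) (fst (pc j)) \<and> S \<subseteq> H) \<and> snd (pc j) (fst j) - snd (pc j) (snd j) \<notin> \<int>"
    by (metis bchoice)
  define pr where "pr j = fst (pc j)" for j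
  define ch where "ch j = snd (pc j)" for j
  have pr_prime: "pr j \<in> Prm" if "j \<in> P" for j using pc[OF that] by (simp add: pr_def)
  have ch_q: "\<exists>H. qchar (tbl G) H (ch j) (pr j) \<and> S \<subseteq> H" if "j \<in> P" for j
    using pc[OF that] by (simp add: pr_def ch_def)
  have ch_sep: "ch j (fst j) - ch j (snd j) \<notin> \<int>" if "j \<in> P" for j
    using pc[OF that] by (simp add: ch_def)
  define jj where "jj i = prod_decode (i - 1)" for i
  define psi where "psi s = (\<lambda>p\<in>Prm. \<lambda>i\<in>Npos. if jj i \<in> P \<and> pr (jj i) = p then frac (ch (jj i) s) else 0)" for s
  have jj_enc: "jj (prod_encode j + 1) = j" for j by (simp add: jj_def)
  have enc_jj: "prod_encode (jj i) + 1 = i" if "i \<in> Npos" for i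
    using that by (simp add: jj_def Npos_def)
  have encN: "prod_encode j + 1 \<in> Npos" for j by (simp add: Npos_def)
  have psi_c: "psi s \<in> carrier ?T" if s: "s \<in> S" for s
  proof -
    have inner: "psi s p \<in> carrier (sum_group Npos (\<lambda>_. prufer p))" if p: "p \<in> Prm" for p
    proof -
      have vals: "(if jj i \<in> P \<and> pr (jj i) = p then frac (ch (jj i) s) else 0) \<in> carrier (prufer p)" for i
      proof (cases "jj i \<in> P \<and> pr (jj i) = p")
        case True
        then obtain H where H: "qchar (tbl G) H (ch (jj i)) p" "S \<subseteq> H" using ch_q by blast
        have "PP p (ch (jj i) s)" using K.qchar_PP[OF H(1)] H(2) s by auto
        thus ?thesis using True by (simp add: frac_carrier_prufer)
      next
        case False
        have "(0::rat) \<in> carrier (prufer p)" by (simp add: carrier_prufer PP_int)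
        thus ?thesis using False by (simp only: if_False)
      qed
      have fin: "finite {i \<in> Npos. psi s p i \<noteq> 0}"
      proof (rule finite_subset[OF _ finite_imageI[OF Pf, of "\<lambda>j. prod_encode j + 1"]])
        show "{i \<in> Npos. psi s p i \<noteq> 0} \<subseteq> (\<lambda>j. prod_encode j + 1) ` P"
        proof
          fix i assume "i \<in> {i \<in> Npos. psi s p i \<noteq> 0}"
          hence i: "i \<in> Npos" "jj i \<in> P" using p by (auto simp: psi_def split: if_splits)
          show "i \<in> (\<lambda>j. prod_encode j + 1) ` P" using enc_jj[OF i(1)] i(2) by force
        qed
      qed
      show ?thesis unfolding carrier_inner using p vals fin by (simp add: psi_def)
    qed
    have fin: "finite {p \<in> Prm. psi s p \<noteq> (\<lambda>i\<in>Npos. 0)}"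
    proof (rule finite_subset[OF _ finite_imageI[OF Pf, of pr]])
      show "{p \<in> Prm. psi s p \<noteq> (\<lambda>i\<in>Npos. 0)} \<subseteq> pr ` P"
      proof
        fix p assume p: "p \<in> {p \<in> Prm. psi s p \<noteq> (\<lambda>i\<in>Npos. 0)}"
        then obtain i where "i \<in> Npos" "psi s p i \<noteq> 0" by (auto simp: psi_def restrict_def fun_eq_iff split: if_splits)
        hence "jj i \<in> P \<and> pr (jj i) = p" using p by (auto simp: psi_def split: if_splits)
        thus "p \<in> pr ` P" by force
      qed
    qed
    show ?thesis unfolding carrier_tg using inner fin by (simp add: psi_def)
  qed
  have psi_hom: "psi (G (x, y)) = psi x \<otimes>\<^bsub>?T\<^esub> psi y" if "x \<in> S" "y \<in> S" for x y
  proof -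
    have "(if jj i \<in> P \<and> pr (jj i) = p then frac (ch (jj i) (G (x, y))) else 0)
        = frac ((if jj i \<in> P \<and> pr (jj i) = p then frac (ch (jj i) x) else 0)
              + (if jj i \<in> P \<and> pr (jj i) = p then frac (ch (jj i) y) else 0))" for p i
    proof (cases "jj i \<in> P \<and> pr (jj i) = p")
      case True
      then obtain H where H: "qchar (tbl G) H (ch (jj i)) (pr (jj i))" "S \<subseteq> H" using ch_q by blast
      have "frac (ch (jj i) (x \<otimes>\<^bsub>tbl G\<^esub> y)) = frac (frac (ch (jj i) x) + frac (ch (jj i) y))"
        by (rule qfrac[OF cgK H(1)]) (use H(2) that in auto)
      thus ?thesis using True by (simp add: cK)
    next
      case False thus ?thesis by (simp only: if_False) simp
    qed
    thus ?thesis unfolding mult_tg psi_def by (intro restrict_ext) simp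
  qed
  have psi_one: "psi 1 = \<one>\<^bsub>?T\<^esub>"
  proof -
    have "(if jj i \<in> P \<and> pr (jj i) = p then frac (ch (jj i) 1) else 0) = 0" for p i
    proof (cases "jj i \<in> P \<and> pr (jj i) = p")
      case True
      then obtain H where H: "qchar (tbl G) H (ch (jj i)) (pr (jj i))" "S \<subseteq> H" using ch_q by blast
      have "ch (jj i) \<one>\<^bsub>tbl G\<^esub> \<in> \<int>" by (rule K.qchar_one[OF H(1)])
      thus ?thesis using True by (simp add: cK)
    next
      case False thus ?thesis by (simp only: if_False)
    qed
    thus ?thesis unfolding one_tg psi_def by (intro restrict_ext) simp
  qed
  have psi_inj: "inj_on psi S"
  proof (rule inj_onI, rule ccontr)
    fix s u assume su: "s \<in> S" "u \<in> S" "psi s = psi u" "s \<noteq> u"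
    define j where "j = (s, u)"
    have jP: "j \<in> P" unfolding j_def P_def using su by auto
    define i where "i = prod_encode j + 1"
    have "psi s (pr j) i = psi u (pr j) i" using su(3) by simp
    hence "frac (ch j s) = frac (ch j u)"
      unfolding psi_def i_def using pr_prime[OF jP] encN jj_enc jP by simp
    hence "ch j s - ch j u \<in> \<int>" by (rule frac_eq_imp_Ints)
    thus False using ch_sep[OF jP] unfolding j_def by simp
  qed
  obtain fA where fA: "fA \<in> iso (tbl A) ?T" using AT by (auto simp: is_iso_def)
  have bA: "bij_betw fA Npos (carrier ?T)" using fA by (simp add: iso_def tbl_def)
  have cT: "countable (carrier ?T)" using bA by (metis bij_betw_imp_surj_on countable_image countableI_type)
  have iT: "infinite (carrier ?T)" using bA Npos_infinite bij_betw_finite by blast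
  have psiS: "psi ` S \<subseteq> carrier ?T" using psi_c by auto
  obtain phi where phi: "bij_betw phi Npos (carrier ?T)" "\<And>x. x \<in> S \<Longrightarrow> phi x = psi x"
    using extend_bij[OF countableI_type Npos_infinite cT iT Sf SN psi_inj psiS] by auto
  have phic: "phi x \<in> carrier ?T" if "x \<in> Npos" for x using phi(1) that by (auto simp: bij_betw_def)
  have phiinj: "inj_on phi Npos" using phi(1) by (simp add: bij_betw_def)
  have phiim: "phi ` Npos = carrier ?T" using phi(1) by (simp add: bij_betw_def)
  define H where "H = (\<lambda>z\<in>Npos \<times> Npos. inv_into Npos phi (phi (fst z) \<otimes>\<^bsub>?T\<^esub> phi (snd z)))"
  have prodc: "phi x \<otimes>\<^bsub>?T\<^esub> phi y \<in> phi ` Npos" if "x \<in> Npos" "y \<in> Npos" for x y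
    using phic[OF that(1)] phic[OF that(2)] group.subgroup_self[OF group_tg] phiim
    by (simp add: group.is_monoid[OF group_tg] monoid.m_closed)
  have Hval: "H (x, y) = inv_into Npos phi (phi x \<otimes>\<^bsub>?T\<^esub> phi y)" if "x \<in> Npos" "y \<in> Npos" for x y
    using that by (simp add: H_def)
  have HN: "H (x, y) \<in> Npos" if "x \<in> Npos" "y \<in> Npos" for x y
    unfolding Hval[OF that] by (rule inv_into_into[OF prodc[OF that]])
  have Hhom: "phi (H (x, y)) = phi x \<otimes>\<^bsub>?T\<^esub> phi y" if "x \<in> Npos" "y \<in> Npos" for x y
    unfolding Hval[OF that] by (rule f_inv_into_f[OF prodc[OF that]])
  have Htop: "H \<in> topspace table_space"
    unfolding table_space_def topspace_product_topology topspace_discrete_topology H_def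
    using HN[unfolded H_def] by (auto simp: restrict_PiE_iff)
  have ctH: "carrier (tbl H) = Npos" "\<And>x y. x \<otimes>\<^bsub>tbl H\<^esub> y = H (x,y)" "\<one>\<^bsub>tbl H\<^esub> = 1"
    by (simp_all add: tbl_def)
  have one_S: "(1::nat) \<in> S" by (simp add: S_def)
  have phi1: "phi 1 = \<one>\<^bsub>?T\<^esub>" using phi(2)[OF one_S] psi_one by simp
  have o1: "\<one>\<^bsub>tbl H\<^esub> \<in> carrier (tbl H)" using one_N by (simp only: ctH)
  have o2: "phi \<one>\<^bsub>tbl H\<^esub> = \<one>\<^bsub>?T\<^esub>" using phi1 by (simp only: ctH)
  have grpH: "group (tbl H)"
    by (rule transport_group[OF group_tg, of phi, OF _ _ _ o1 o2]) (simp_all add: ctH phi(1) Hhom HN)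
  have HGG: "H \<in> GG" unfolding GG_def using Htop grpH by simp
  have "phi \<in> iso (tbl H) ?T"
    unfolding iso_def hom_def using phic phi(1) Hhom by (auto simp: ctH)
  hence HT: "tbl H \<cong> ?T" by (auto simp: is_iso_def)
  have gA: "group (tbl A)" using AG by (simp add: GG_def)
  have TA: "?T \<cong> tbl A" using group.iso_sym[OF gA AT] .
  have HA: "tbl H \<cong> tbl A" using iso_trans[OF HT TA] .
  have agree: "H z = G z" if z: "z \<in> C" for z
  proof -
    obtain x y where xy: "z = (x, y)" by (cases z)
    have xS: "x \<in> S" and yS: "y \<in> S" and gS: "G (x,y) \<in> S" using z unfolding xy S_def by force+
    have xN: "x \<in> Npos" and yN: "y \<in> Npos" and gN: "G (x,y) \<in> Npos" using xS yS gS SN by auto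
    have "H (x, y) = inv_into Npos phi (psi x \<otimes>\<^bsub>?T\<^esub> psi y)" using Hval[OF xN yN] phi(2)[OF xS] phi(2)[OF yS] by simp
    also have "\<dots> = inv_into Npos phi (phi (G (x, y)))" using psi_hom[OF xS yS] phi(2)[OF gS] by simp
    also have "\<dots> = G (x, y)" by (rule inv_into_f_f[OF phiinj gN])
    finally show ?thesis unfolding xy .
  qed
  show ?thesis using HGG HA agree by blast
qed



theorem proposition8p6:
  assumes "A \<in> GG"
    and "tbl A \<cong> target_group"
  shows "{G \<in> GG. tbl G \<cong> tbl A} \<subseteq> AA
    \<and> (subtopology table_space AA) closure_of {G \<in> GG. tbl G \<cong> tbl A} = AA"
proof -
  have gA: "group (tbl A)" using assms(1) by (simp add: GG_def)
  have sub: "{G \<in> GG. tbl G \<cong> tbl A} \<subseteq> AA"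
  proof
    fix G assume G: "G \<in> {G \<in> GG. tbl G \<cong> tbl A}"
    have gG: "group (tbl G)" using G by (simp add: GG_def)
    have "tbl G \<cong> target_group" using iso_trans[of "tbl G" "tbl A" target_group] G assms(2) by auto
    hence "target_group \<cong> tbl G" by (rule group.iso_sym[OF gG])
    hence "comm_group (tbl G)"
      by (rule comm_group.iso_imp_comm_group[OF comm_group_tg _ group.is_monoid[OF gG]])
    thus "G \<in> AA" using G by (simp add: AA_def)
  qed
  have AAt: "AA \<subseteq> topspace table_space" by (auto simp: AA_def GG_def)
  have cl: "subtopology table_space AA closure_of {G \<in> GG. tbl G \<cong> tbl A} = AA"
  proof
    show "subtopology table_space AA closure_of {G \<in> GG. tbl G \<cong> tbl A} \<subseteq> AA"
      using closure_of_subset_topspace[of "subtopology table_space AA"] by auto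
    show "AA \<subseteq> subtopology table_space AA closure_of {G \<in> GG. tbl G \<cong> tbl A}"
    proof
      fix G assume GA: "G \<in> AA"
      show "G \<in> subtopology table_space AA closure_of {G \<in> GG. tbl G \<cong> tbl A}"
        unfolding in_closure_of
      proof (intro conjI allI impI)
        show "G \<in> topspace (subtopology table_space AA)" using GA AAt by auto
        fix T assume T: "G \<in> T \<and> openin (subtopology table_space AA) T"
        then obtain U where U: "openin table_space U" "T = U \<inter> AA" by (auto simp: openin_subtopology)
        have GU: "G \<in> U" using T U by auto
        obtain W where W: "finite {i \<in> Npos \<times> Npos. W i \<noteq> topspace (discrete_topology Npos)}"
            "G \<in> Pi\<^sub>E (Npos \<times> Npos) W" "Pi\<^sub>E (Npos \<times> Npos) W \<subseteq> U"
          using U(1) GU unfolding table_space_def openin_product_topology_alt by blast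
        define C where "C = {i \<in> Npos \<times> Npos. W i \<noteq> Npos}"
        have Cf: "finite C" using W(1) by (simp add: C_def)
        have CN: "C \<subseteq> Npos \<times> Npos" by (auto simp: C_def)
        obtain H where H: "H \<in> GG" "tbl H \<cong> tbl A" "\<forall>z\<in>C. H z = G z"
          using dense_main[OF GA assms(2) assms(1) Cf CN] by auto
        have Htop: "H \<in> Pi\<^sub>E (Npos \<times> Npos) (\<lambda>_. Npos)"
          using H(1) by (simp add: GG_def table_space_def)
        have "H \<in> Pi\<^sub>E (Npos \<times> Npos) W"
          unfolding PiE_iff
        proof (intro conjI ballI)
          show "H \<in> extensional (Npos \<times> Npos)" using Htop by (simp add: PiE_iff)
          fix z assume z: "z \<in> Npos \<times> Npos"
          show "H z \<in> W z"
          proof (cases "z \<in> C")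
            case True
            thus ?thesis using H(3) W(2) z by (auto simp: PiE_iff)
          next
            case False
            hence "W z = Npos" using z by (simp add: C_def)
            thus ?thesis using Htop z by (auto simp: PiE_iff)
          qed
        qed
        hence "H \<in> U" using W(3) by auto
        moreover have "H \<in> AA" using sub H(1,2) by auto
        ultimately show "\<exists>y. y \<in> {G \<in> GG. tbl G \<cong> tbl A} \<and> y \<in> T" using H U by auto
      qed
    qed
  qed
  show ?thesis using sub cl by blast
qed


end
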